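(* Let $g_1,g_2$ be independent exponential random variables with means $\varepsilon_1,\varepsilon_2>0$. Fix rates $R_d>R_s\ge0$ and $\rho\ge0$, set $SNR=P_s/\sigma^2$, $INR=P_d/\sigma^2=SNR^\rho$. Define the events $$E_o^{\mathrm{AF}}=\Big\{\tfrac12\log_2\!\Big(1+\frac{SNR^2g_1g_2}{SNR\,g_1+(SNR+INR)g_2+1}\Big)<R_d\Big\},\qquad E_l=\Big\{\tfrac12\log_2\!\Big(1+\frac{g_1SNR}{g_2INR+1}\Big)>R_d-R_s\Big\},$$ and $p_t^{\mathrm{AF}}=\Pr(E_o^{\mathrm{AF}}\cup E_l)$. Then $$\limsup_{SNR\to\infty}\frac{-\log p_t^{\mathrm{AF}}}{\log SNR}=\begin{cases}0,&\rho\le1,\\ \rho-1,&1<\rho\le 3/2,\\ 2-\rho,&3/2<\rho\le2,\\ 0,&\rho\ge2.\end{cases}$$ In particular the generalized secure diversity gain of amplify-and-forward is at most $1/2$, attained only at $\rho=3/2$.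
   Context: Amplify-and-forward relaying in the untrusted relay channel without channel state information at the transmitter: $g_i=|h_i|^2$ with $h_i\sim\mathcal{CN}(0,\varepsilon_i)$ independent ($g_1$ source–relay, $g_2$ destination–relay and relay–destination), $P_s$ source/relay power, $P_d$ destination artificial-noise power, $\sigma^2$ noise variance, $R_d$ total rate, $R_s$ confidential rate. $E_o^{\mathrm{AF}}$ is connection outage at the destination and $E_l$ secrecy outage at the relay. The generalized secure diversity gain is $\limsup_{SNR\to\infty}(-\log p_t)/\log SNR$ with $INR=SNR^\rho$. *)

theory Defs
  imports "HOL-Probability.Probability"
begin

definition EoAF :: "real \<Rightarrow> real \<Rightarrow> real \<Rightarrow> real \<Rightarrow> real \<Rightarrow> bool" where
  "EoAF Rd snr inr g1 g2 \<longleftrightarrow>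
     1/2 * log 2 (1 + snr^2 * g1 * g2 / (snr * g1 + (snr + inr) * g2 + 1)) < Rd"

definition El :: "real \<Rightarrow> real \<Rightarrow> real \<Rightarrow> real \<Rightarrow> real \<Rightarrow> real \<Rightarrow> bool" where
  "El Rd Rs snr inr g1 g2 \<longleftrightarrow>
     1/2 * log 2 (1 + g1 * snr / (g2 * inr + 1)) > Rd - Rs"

definition ptAF :: "'w measure \<Rightarrow> ('w \<Rightarrow> real) \<Rightarrow> ('w \<Rightarrow> real) \<Rightarrow> real \<Rightarrow> real \<Rightarrow> real \<Rightarrow> real \<Rightarrow> real" where
  "ptAF M X1 X2 Rd Rs \<rho> snr =
     measure M {\<omega> \<in> space M. EoAF Rd snr (snr powr \<rho>) (X1 \<omega>) (X2 \<omega>)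
                              \<or> El Rd Rs snr (snr powr \<rho>) (X1 \<omega>) (X2 \<omega>)}"

definition dAF :: "real \<Rightarrow> real" where
  "dAF \<rho> = (if \<rho> \<le> 1 then 0 else if \<rho> \<le> 3/2 then \<rho> - 1
            else if \<rho> \<le> 2 then 2 - \<rho> else 0)"

end

theory Submission
  imports Defs
begin

lemma ev_powr_ge:
  fixes a K :: real assumes "a > 0"
  shows "eventually (\<lambda>s. K \<le> s powr a) at_top"
proof -
  have "eventually (\<lambda>s. max 1 (\<bar>K\<bar> powr (1/a)) \<le> s) at_top" by (rule eventually_ge_at_top)
  then show ?thesis
  proof eventually_elim
    case (elim s)
    show ?case
    proof (cases "K \<le> 0")
      case True then show ?thesis using powr_ge_zero[of s a] by linarith
    next
      case False
      have "K = (K powr (1/a)) powr a" using False assms by (simp add: powr_powr)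
      also have "\<dots> \<le> s powr a"
        using elim False assms by (intro powr_mono2) auto
      finally show ?thesis .
    qed
  qed
qed

lemma one_minus_exp_le: "1 - exp (- x) \<le> (x::real)"
  using exp_ge_add_one_self[of "-x"] by simp

lemma one_minus_exp_ge: assumes "(x::real) \<ge> 0" shows "min x 1 / 2 \<le> 1 - exp (- x)"
proof -
  have "1 + x \<le> exp x" by simp
  hence "exp (-x) \<le> 1 / (1 + x)" using assms by (simp add: exp_minus field_simps)
  hence "x / (1 + x) \<le> 1 - exp (-x)" using assms by (simp add: field_simps)
  moreover have "min x 1 / 2 \<le> x / (1 + x)"
  proof (cases "x \<le> 1")
    case True then show ?thesis using assms mult_left_mono[of x 1 x] by (auto simp: field_simps)
  qed (use assms in \<open>auto simp: field_simps\<close>)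
  ultimately show ?thesis by linarith
qed

lemma ev_lower_min:
  fixes K C d \<delta> :: real
  assumes "K > 0" "C > 0" "d \<ge> 0" "\<delta> > 0"
  shows "eventually (\<lambda>s. s powr (-(d+\<delta>)) \<le> min (K * s powr (-d)) C) at_top"
  using ev_powr_ge[OF assms(4), of "max (1/K) (1/C)"] eventually_ge_at_top[of 1]
proof eventually_elim
  case (elim s)
  have sp: "s powr \<delta> > 0" using elim by simp
  have e: "s powr (-(d+\<delta>)) = s powr (-d) / s powr \<delta>"
    by (simp add: powr_diff[symmetric])
  have d1: "s powr (-d) \<le> 1" using elim assms powr_mono[of "-d" 0 s] by simp
  have "s powr (-d) / s powr \<delta> \<le> s powr (-d) * K"
    using elim sp assms by (simp add: field_simps mult_left_mono)
  moreover have "s powr (-d) / s powr \<delta> \<le> C"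
  proof -
    have "s powr (-d) / s powr \<delta> \<le> 1 / s powr \<delta>" using d1 sp by (simp add: divide_right_mono)
    also have "\<dots> \<le> C" using elim sp assms by (simp add: field_simps)
    finally show ?thesis .
  qed
  ultimately show ?case unfolding e by (simp add: mult.commute)
qed

lemma half_log_gt: "0 < (y::real) \<Longrightarrow> (R < 1/2 * log 2 y) \<longleftrightarrow> 2 powr (2*R) < y"
  using less_log_iff[of 2 y "2*R"] by auto

lemma half_log_lt: "0 < (y::real) \<Longrightarrow> (1/2 * log 2 y < R) \<longleftrightarrow> y < 2 powr (2*R)"
  using log_less_iff[of 2 y "2*R"] by auto

lemma El_in:
  fixes s \<rho> g1 g2 Rd Rs :: real
  defines "c \<equiv> 2 powr (2*(Rd-Rs)) - 1"
  assumes s: "1 \<le> s" and c: "0 < c" and g1: "2*c < g1" and g2: "0 \<le> g2" "g2 \<le> s powr (1-\<rho>)"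
  shows "El Rd Rs s (s powr \<rho>) g1 g2"
proof -
  have "g2 * s powr \<rho> \<le> s powr (1-\<rho>) * s powr \<rho>" using g2 by (intro mult_right_mono) auto
  also have "\<dots> = s" using s by (simp add: powr_add[symmetric])
  finally have a: "g2 * s powr \<rho> \<le> s" .
  have dp: "0 < g2 * s powr \<rho> + 1" using g2 s by (simp add: add_nonneg_pos)
  have "c * (g2 * s powr \<rho> + 1) \<le> c * (2 * s)" using a s c by (intro mult_left_mono) auto
  also have "\<dots> < g1 * s" using g1 s by (simp add: mult_strict_right_mono)
  finally have "c < g1 * s / (g2 * s powr \<rho> + 1)" using dp by (simp add: field_simps)
  moreover have "0 < 1 + g1 * s / (g2 * s powr \<rho> + 1)" using dp g1 c s by (simp add: add_pos_nonneg)
  ultimately show ?thesis unfolding El_def using half_log_gt[of "1 + g1 * s / (g2 * s powr \<rho> + 1)" "Rd - Rs"]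
    unfolding c_def by simp
qed

lemma El_out:
  fixes s \<rho> g1 g2 Rd Rs t u :: real
  defines "c \<equiv> 2 powr (2*(Rd-Rs)) - 1"
  assumes s: "0 < s" and c: "0 < c" and g1: "0 \<le> g1" "g1 \<le> t" and u: "0 \<le> u" "u < g2"
    and tu: "t * s = c * u * s powr \<rho>"
  shows "\<not> El Rd Rs s (s powr \<rho>) g1 g2"
proof -
  have dp: "0 < g2 * s powr \<rho> + 1" using u s by (simp add: add_nonneg_pos)
  have "g1 * s \<le> t * s" using g1 s by (simp add: mult_right_mono)
  also have "\<dots> = c * (u * s powr \<rho>)" using tu by simp
  also have "\<dots> \<le> c * (g2 * s powr \<rho>)" using u c by (intro mult_left_mono mult_right_mono) auto
  also have "\<dots> < c * (g2 * s powr \<rho> + 1)" using c by simp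
  finally have "g1 * s / (g2 * s powr \<rho> + 1) < c" using dp by (simp add: field_simps)
  moreover have "0 < 1 + g1 * s / (g2 * s powr \<rho> + 1)" using dp g1 s by (simp add: add_pos_nonneg)
  ultimately show ?thesis unfolding El_def using half_log_gt[of "1 + g1 * s / (g2 * s powr \<rho> + 1)" "Rd - Rs"]
    unfolding c_def by simp
qed

lemma Eo_in:
  fixes s \<rho> g1 g2 Rd :: real
  defines "e \<equiv> 2 powr (2*Rd) - 1"
  assumes s: "0 < s" and e: "0 < e" and g: "0 \<le> g1" "0 \<le> g2" and g1: "g1 \<le> e * s powr (\<rho>-2) / 2"
  shows "EoAF Rd s (s powr \<rho>) g1 g2"
proof -
  define D where "D = s * g1 + (s + s powr \<rho>) * g2 + 1"
  have Dp: "0 < D" unfolding D_def using s g by (intro add_nonneg_pos) auto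
  have Q: "s^2 * g1 * g2 / D < e"
  proof (cases "g2 = 0")
    case True then show ?thesis using e by simp
  next
    case False
    hence g2p: "0 < g2" using g by simp
    have "s powr \<rho> * g2 \<le> D" unfolding D_def using s g by (simp add: algebra_simps add_nonneg_nonneg)
    hence "s^2 * g1 * g2 / D \<le> s^2 * g1 * g2 / (s powr \<rho> * g2)"
      using g2p s g Dp by (intro divide_left_mono) auto
    also have "\<dots> = s^2 * g1 / s powr \<rho>" using g2p by simp
    also have "\<dots> \<le> s^2 * (e * s powr (\<rho>-2) / 2) / s powr \<rho>"
      using g1 s by (intro divide_right_mono mult_left_mono) auto
    also have "\<dots> = e / 2 * (s powr 2 * s powr (\<rho>-2) / s powr \<rho>)"
      using s by (simp add: powr_numeral)
    also have "s powr 2 * s powr (\<rho>-2) = s powr \<rho>" by (simp add: powr_add[symmetric])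
    also have "e / 2 * (s powr \<rho> / s powr \<rho>) < e" using s e by simp
    finally show ?thesis .
  qed
  have "0 < 1 + s^2 * g1 * g2 / D" using Dp g s by (intro add_pos_nonneg) auto
  then show ?thesis unfolding EoAF_def D_def[symmetric] using half_log_lt Q unfolding e_def by simp
qed

lemma Eo_out:
  fixes s \<rho> g1 g2 Rd ta tb :: real
  defines "e \<equiv> 2 powr (2*Rd) - 1"
  assumes s: "0 < s" and e: "0 < e" and g: "ta \<le> g1" "tb \<le> g2" "0 < ta" "0 < tb"
    and h: "3*e \<le> s * tb" "3*e*(s + s powr \<rho>) \<le> s^2 * ta" "3*e \<le> s^2*ta*tb"
  shows "\<not> EoAF Rd s (s powr \<rho>) g1 g2"
proof -
  define D where "D = s * g1 + (s + s powr \<rho>) * g2 + 1"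
  have Dp: "0 < D" unfolding D_def using s g by (intro add_nonneg_pos) auto
  have h1: "3*e*(s*g1) \<le> (s*g2)*(s*g1)"
    proof -
    have "s*tb \<le> s*g2" using g s by (simp add: mult_left_mono)
    hence "3*e \<le> s*g2" using h(1) by linarith
    thus ?thesis using g s by (intro mult_right_mono) auto
  qed
  have h2: "3*e*(s + s powr \<rho>) * g2 \<le> (s^2 * g1) * g2"
    proof -
    have "s^2*ta \<le> s^2*g1" using g s by (simp add: mult_left_mono)
    hence "3*e*(s + s powr \<rho>) \<le> s^2*g1" using h(2) by linarith
    thus ?thesis using g s by (intro mult_right_mono) auto
  qed
  have h3: "s^2*ta*tb \<le> s^2*g1*g2"
    using g s by (intro mult_mono) auto
  have "3*e*D \<le> 3 * (s^2*g1*g2)" unfolding D_def using h1 h2 h3 h(3)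
    by (simp add: algebra_simps power2_eq_square)
  hence "e \<le> s^2 * g1 * g2 / D" using Dp by (simp add: field_simps)
  moreover have "0 < 1 + s^2 * g1 * g2 / D" using Dp g s by (intro add_pos_nonneg) auto
  ultimately show ?thesis unfolding EoAF_def D_def[symmetric] using half_log_lt unfolding e_def by force
qed

lemma ev_lower_min2:
  fixes K L d \<delta> :: real
  assumes "K > 0" "L > 0" "d \<ge> 0" "\<delta> > 0"
  shows "eventually (\<lambda>s. s powr (-(d+\<delta>)) \<le> K * min (L * s powr (-d)) 1) at_top"
  using ev_lower_min[of "K*L" K d \<delta>] assms
proof -
  have "eventually (\<lambda>s. s powr (-(d+\<delta>)) \<le> min (K * L * s powr (-d)) K) at_top"
    using assms by (intro ev_lower_min) auto
  moreover have "min (K * L * s powr (-d)) K = K * min (L * s powr (-d)) 1" for s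
    using assms by (simp add: min_def mult_le_cancel_left_pos mult.assoc)
  ultimately show ?thesis by simp
qed

theorem mainTheorem8:
  fixes M :: "'w measure" and X1 X2 :: "'w \<Rightarrow> real"
    and \<epsilon>1 \<epsilon>2 Rd Rs \<rho> :: real
  assumes "prob_space M"
    and "\<epsilon>1 > 0" and "\<epsilon>2 > 0"
    and "distributed M lborel X1 (exponential_density (1 / \<epsilon>1))"
    and "distributed M lborel X2 (exponential_density (1 / \<epsilon>2))"
    and "prob_space.indep_var M borel X1 borel X2"
    and "Rd > Rs" and "Rs \<ge> 0" and "\<rho> \<ge> 0"
  shows "Limsup at_top (\<lambda>snr. ereal (- ln (ptAF M X1 X2 Rd Rs \<rho> snr) / ln snr)) = ereal (dAF \<rho>)
         \<and> dAF \<rho> \<le> 1/2 \<and> (dAF \<rho> = 1/2 \<longleftrightarrow> \<rho> = 3/2)"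
proof -
  interpret P: prob_space M by fact
  have l1: "0 < 1/\<epsilon>1" and l2: "0 < 1/\<epsilon>2" using assms by auto
  have X1m[measurable]: "X1 \<in> borel_measurable M"
    using P.exponential_distributed_iff[OF l1] assms(4) by auto
  have X2m[measurable]: "X2 \<in> borel_measurable M"
    using P.exponential_distributed_iff[OF l2] assms(5) by auto
  have gt1: "measure M {\<omega>\<in>space M. a < X1 \<omega>} = exp (- a / \<epsilon>1)" if "0 \<le> a" for a
    using P.exponential_distributedD_gt[OF assms(4) that l1] by simp
  have le1: "measure M {\<omega>\<in>space M. X1 \<omega> \<le> a} = 1 - exp (- a / \<epsilon>1)" if "0 \<le> a" for a
    using P.exponential_distributedD_le[OF assms(4) that l1] by simp
  have le2: "measure M {\<omega>\<in>space M. X2 \<omega> \<le> a} = 1 - exp (- a / \<epsilon>2)" if "0 \<le> a" for a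
    using P.exponential_distributedD_le[OF assms(5) that l2] by simp
  have le1': "measure M {\<omega>\<in>space M. X1 \<omega> \<le> a} \<le> a / \<epsilon>1" if "0 \<le> a" for a
    using le1[OF that] one_minus_exp_le[of "a/\<epsilon>1"] by simp
  have le2': "measure M {\<omega>\<in>space M. X2 \<omega> \<le> a} \<le> a / \<epsilon>2" if "0 \<le> a" for a
    using le2[OF that] one_minus_exp_le[of "a/\<epsilon>2"] by simp
  define N1 where "N1 = {\<omega>\<in>space M. X1 \<omega> < 0}"
  define N2 where "N2 = {\<omega>\<in>space M. X2 \<omega> < 0}"
  have N1m[measurable]: "N1 \<in> sets M" and N2m[measurable]: "N2 \<in> sets M" unfolding N1_def N2_def by measurable
  have N1z: "measure M N1 = 0"
  proof -
    have "measure M N1 \<le> measure M {\<omega>\<in>space M. X1 \<omega> \<le> 0}"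
      unfolding N1_def by (intro P.finite_measure_mono) auto
    then show ?thesis using le1[of 0] measure_nonneg[of M N1] by simp
  qed
  have N2z: "measure M N2 = 0"
  proof -
    have "measure M N2 \<le> measure M {\<omega>\<in>space M. X2 \<omega> \<le> 0}"
      unfolding N2_def by (intro P.finite_measure_mono) auto
    then show ?thesis using le2[of 0] measure_nonneg[of M N2] by simp
  qed
  define c where "c = 2 powr (2*(Rd-Rs)) - 1"
  define e where "e = 2 powr (2*Rd) - 1"
  have c: "0 < c" unfolding c_def using powr_less_mono[of 0 "2*(Rd-Rs)" 2] assms by simp
  have e: "0 < e" unfolding e_def using powr_less_mono[of 0 "2*Rd" 2] assms by simp
  define A where "A s = {\<omega> \<in> space M. EoAF Rd s (s powr \<rho>) (X1 \<omega>) (X2 \<omega>)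
                              \<or> El Rd Rs s (s powr \<rho>) (X1 \<omega>) (X2 \<omega>)}" for s
  have Am[measurable]: "A s \<in> sets M" for s unfolding A_def EoAF_def El_def by measurable
  have p_eq: "ptAF M X1 X2 Rd Rs \<rho> s = measure M (A s)" for s by (simp add: ptAF_def A_def)
  have LB1: "exp (-(2*c)/\<epsilon>1) * (1 - exp (- (s powr (1-\<rho>)) / \<epsilon>2)) \<le> measure M (A s)"
    if s: "1 \<le> s" for s
  proof -
    define B where "B = {\<omega>\<in>space M. X1 \<omega> \<in> {2*c<..} \<and> X2 \<omega> \<in> {..s powr (1-\<rho>)}}"
    have "measure M B = measure M {\<omega>\<in>space M. X1 \<omega> \<in> {2*c<..}} * measure M {\<omega>\<in>space M. X2 \<omega> \<in> {..s powr (1-\<rho>)}}"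
      unfolding B_def by (rule P.prob_indep_random_variable[OF assms(6)]) auto
    also have "\<dots> = exp (-(2*c)/\<epsilon>1) * (1 - exp (- (s powr (1-\<rho>)) / \<epsilon>2))"
      using gt1[of "2*c"] le2[of "s powr (1-\<rho>)"] c by simp
    finally have mB: "measure M B = exp (-(2*c)/\<epsilon>1) * (1 - exp (- (s powr (1-\<rho>)) / \<epsilon>2))" .
    have "B \<subseteq> A s \<union> N2"
    proof
      fix \<omega> assume w: "\<omega> \<in> B"
      show "\<omega> \<in> A s \<union> N2"
      proof (cases "X2 \<omega> < 0")
        case True then show ?thesis using w unfolding B_def N2_def by auto
      next
        case False
        then have "El Rd Rs s (s powr \<rho>) (X1 \<omega>) (X2 \<omega>)"
          using w s c unfolding B_def by (intro El_in[where Rs=Rs and Rd=Rd, folded c_def]) auto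
        then show ?thesis using w unfolding A_def B_def by auto
      qed
    qed
    hence "measure M B \<le> measure M (A s \<union> N2)" by (intro P.finite_measure_mono) auto
    also have "\<dots> \<le> measure M (A s) + measure M N2" by (intro measure_Un_le) auto
    finally show ?thesis using mB N2z by simp
  qed
  have LB2: "1 - exp (- (e * s powr (\<rho>-2) / 2) / \<epsilon>1) \<le> measure M (A s)"
    if s: "0 < s" for s
  proof -
    define B where "B = {\<omega>\<in>space M. X1 \<omega> \<le> e * s powr (\<rho>-2) / 2}"
    have mB: "measure M B = 1 - exp (- (e * s powr (\<rho>-2) / 2) / \<epsilon>1)"
      unfolding B_def using le1[of "e * s powr (\<rho>-2) / 2"] e by simp
    have "B \<subseteq> A s \<union> N1 \<union> N2"
    proof
      fix \<omega> assume w: "\<omega> \<in> B"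
      show "\<omega> \<in> A s \<union> N1 \<union> N2"
      proof (cases "X1 \<omega> < 0 \<or> X2 \<omega> < 0")
        case True then show ?thesis using w unfolding B_def N1_def N2_def by auto
      next
        case False
        then have "EoAF Rd s (s powr \<rho>) (X1 \<omega>) (X2 \<omega>)"
          using w s e unfolding B_def by (intro Eo_in[where Rd=Rd, folded e_def]) auto
        then show ?thesis using w unfolding A_def B_def by auto
      qed
    qed
    hence "measure M B \<le> measure M (A s \<union> N1 \<union> N2)" by (intro P.finite_measure_mono) auto
    also have "\<dots> \<le> measure M (A s \<union> N1) + measure M N2" by (intro measure_Un_le) auto
    also have "\<dots> \<le> measure M (A s) + measure M N1 + measure M N2" using measure_Un_le[of "A s" M N1] by auto
    finally show ?thesis using mB N1z N2z by simp
  qed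
  have UB: "measure M (A s) \<le> 1/s + \<epsilon>1/(c*\<epsilon>2) * ln s * s powr (1-\<rho>) + s powr (\<rho>-2+\<eta>)/\<epsilon>1 + s powr (-1+\<eta>)/\<epsilon>2"
    if s: "1 < s" and eta: "0 < \<eta>" and r: "1 \<le> \<rho>" and se: "6*e \<le> s powr \<eta>" for s \<eta>
  proof -
    define t where "t = \<epsilon>1 * ln s"
    define u where "u = t * s / (c * s powr \<rho>)"
    define t1 where "t1 = s powr (\<rho>-2+\<eta>)"
    define t2 where "t2 = s powr (-1+\<eta>)"
    have lns: "0 < ln s" using s by simp
    have t0: "0 \<le> t" unfolding t_def using lns assms by simp
    have u0: "0 \<le> u" unfolding u_def using t0 s c by simp
    have t1p: "0 < t1" and t2p: "0 < t2" unfolding t1_def t2_def using s by auto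
    have tu: "t * s = c * u * s powr \<rho>" unfolding u_def using c s by (simp add: field_simps)
    have s1: "s powr 1 = s" using s by simp
    have s2: "s powr 2 = s^2" using s by (simp add: powr_numeral)
    have pw1: "s * t2 = s powr \<eta>" unfolding t2_def
      using powr_add[of s 1 "-1+\<eta>"] s1 by simp
    have pw2: "s^2 * t1 = s powr \<rho> * s powr \<eta>" unfolding t1_def
      using powr_add[of s 2 "\<rho>-2+\<eta>"] powr_add[of s \<rho> \<eta>] s2 by simp
    have pw3: "s^2 * t1 * t2 = s powr (\<rho>-1+2*\<eta>)" unfolding t1_def t2_def
      using powr_add[of s 2 "\<rho>-2+\<eta>"] powr_add[of s "\<rho>+\<eta>" "-1+\<eta>"] s2 by (simp add: algebra_simps)
    have h1: "3*e \<le> s * t2" using pw1 se e by simp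
    have ssr: "s \<le> s powr \<rho>" using powr_mono[of 1 \<rho> s] s r s1 by simp
    have h2: "3*e*(s + s powr \<rho>) \<le> s^2 * t1"
    proof -
      have "3*e*(s + s powr \<rho>) \<le> 3*e*(2 * s powr \<rho>)" using ssr e by (intro mult_left_mono) auto
      also have "\<dots> = (6*e) * s powr \<rho>" by simp
      also have "\<dots> \<le> s powr \<eta> * s powr \<rho>" using se by (intro mult_right_mono) auto
      finally show ?thesis using pw2 by (simp add: mult.commute)
    qed
    have h3: "3*e \<le> s^2*t1*t2"
    proof -
      have "s powr \<eta> \<le> s powr (\<rho>-1+2*\<eta>)" using powr_mono[of \<eta> "\<rho>-1+2*\<eta>" s] s r eta by simp
      then show ?thesis using pw3 se e by simp
    qed
    define S1 where "S1 = {\<omega>\<in>space M. t < X1 \<omega>}"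
    define S2 where "S2 = {\<omega>\<in>space M. X2 \<omega> \<le> u}"
    define S3 where "S3 = {\<omega>\<in>space M. X1 \<omega> \<le> t1}"
    define S4 where "S4 = {\<omega>\<in>space M. X2 \<omega> \<le> t2}"
    have Sm[measurable]: "S1 \<in> sets M" "S2 \<in> sets M" "S3 \<in> sets M" "S4 \<in> sets M"
      unfolding S1_def S2_def S3_def S4_def by measurable
    have sub: "A s \<subseteq> S1 \<union> S2 \<union> S3 \<union> S4 \<union> N1 \<union> N2"
    proof
      fix \<omega> assume w: "\<omega> \<in> A s"
      show "\<omega> \<in> S1 \<union> S2 \<union> S3 \<union> S4 \<union> N1 \<union> N2"
      proof (rule ccontr)
        assume "\<not> ?thesis"
        hence nn: "0 \<le> X1 \<omega>" "0 \<le> X2 \<omega>" "X1 \<omega> \<le> t" "u < X2 \<omega>" "t1 < X1 \<omega>" "t2 < X2 \<omega>"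
          using w unfolding A_def S1_def S2_def S3_def S4_def N1_def N2_def by auto
        have "\<not> El Rd Rs s (s powr \<rho>) (X1 \<omega>) (X2 \<omega>)"
          using nn s c u0 tu by (intro El_out[where Rs=Rs and Rd=Rd and t=t and u=u, folded c_def]) auto
        moreover have "\<not> EoAF Rd s (s powr \<rho>) (X1 \<omega>) (X2 \<omega>)"
          using nn s e t1p t2p h1 h2 h3
          by (intro Eo_out[where Rd=Rd and ta=t1 and tb=t2, folded e_def]) auto
        ultimately show False using w unfolding A_def by auto
      qed
    qed
    have "measure M (A s) \<le> measure M (S1 \<union> S2 \<union> S3 \<union> S4 \<union> N1 \<union> N2)"
      using sub by (intro P.finite_measure_mono) auto
    also have "\<dots> \<le> measure M S1 + measure M S2 + measure M S3 + measure M S4 + measure M N1 + measure M N2"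
      using measure_Un_le[of "S1 \<union> S2 \<union> S3 \<union> S4 \<union> N1" M N2]
        measure_Un_le[of "S1 \<union> S2 \<union> S3 \<union> S4" M N1]
        measure_Un_le[of "S1 \<union> S2 \<union> S3" M S4]
        measure_Un_le[of "S1 \<union> S2" M S3]
        measure_Un_le[of "S1" M S2] by auto
    also have "measure M S1 = 1/s"
    proof -
      have "-t/\<epsilon>1 = - ln s" unfolding t_def using assms(2) by simp
      then show ?thesis unfolding S1_def using gt1[OF t0] s by (simp add: exp_minus inverse_eq_divide)
    qed
    also have "measure M S2 \<le> u / \<epsilon>2" unfolding S2_def by (rule le2'[OF u0])
    also have "measure M S3 \<le> t1 / \<epsilon>1" unfolding S3_def using t1p by (intro le1') auto
    also have "measure M S4 \<le> t2 / \<epsilon>2" unfolding S4_def using t2p by (intro le2') auto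
    also have "u / \<epsilon>2 = \<epsilon>1/(c*\<epsilon>2) * ln s * s powr (1-\<rho>)"
      unfolding u_def t_def using s c assms(3) by (simp add: powr_diff s1 field_simps)
    finally show ?thesis using N1z N2z unfolding t1_def t2_def by simp
  qed
  define d where "d = dAF \<rho>"
  have d0: "0 \<le> d" and dhalf: "d \<le> 1/2" unfolding d_def dAF_def by auto
  have lower: "eventually (\<lambda>s. s powr (-(d+\<delta>)) \<le> measure M (A s)) at_top" if \<delta>: "0 < \<delta>" for \<delta>
  proof (cases "\<rho> \<le> 3/2")
    case True
    have dd: "-d \<le> 1-\<rho>" using True assms unfolding d_def dAF_def by auto
    define K1 where "K1 = exp (-(2*c)/\<epsilon>1)"
    have K1: "0 < K1" unfolding K1_def by simp
    have "eventually (\<lambda>s. s powr (-(d+\<delta>)) \<le> (K1/2) * min (1/\<epsilon>2 * s powr (-d)) 1) at_top"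
      using assms d0 \<delta> K1 by (intro ev_lower_min2) auto
    with eventually_ge_at_top[of "1::real"]
    show ?thesis
    proof eventually_elim
      case (elim s)
      define x where "x = s powr (1-\<rho>) / \<epsilon>2"
      have x0: "0 \<le> x" unfolding x_def using assms by simp
      have "s powr (-d) \<le> s powr (1-\<rho>)" using powr_mono[OF dd] elim by simp
      hence "1/\<epsilon>2 * s powr (-d) \<le> x" unfolding x_def using assms by (simp add: divide_right_mono)
      hence "min (1/\<epsilon>2 * s powr (-d)) 1 \<le> min x 1" by simp
      also have "\<dots> \<le> 2 * (1 - exp (-x))" using one_minus_exp_ge[OF x0] by simp
      finally have hm: "min (1/\<epsilon>2 * s powr (-d)) 1 \<le> 2 * (1 - exp (-x))" .
      have "(K1/2) * min (1/\<epsilon>2 * s powr (-d)) 1 \<le> (K1/2) * (2 * (1 - exp (-x)))"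
        using hm K1 by (intro mult_left_mono) auto
      also have "\<dots> = K1 * (1 - exp (-x))" by simp
      also have "\<dots> \<le> measure M (A s)" using LB1[of s] elim unfolding K1_def x_def by simp
      finally show ?case by (rule order_trans[OF elim(2)])
    qed
  next
    case False
    have dd: "-d \<le> \<rho>-2" using False unfolding d_def dAF_def by auto
    have "eventually (\<lambda>s. s powr (-(d+\<delta>)) \<le> (1/2) * min (e/(2*\<epsilon>1) * s powr (-d)) 1) at_top"
      using assms d0 \<delta> e by (intro ev_lower_min2) auto
    with eventually_ge_at_top[of "1::real"]
    show ?thesis
    proof eventually_elim
      case (elim s)
      define x where "x = e * s powr (\<rho>-2) / 2 / \<epsilon>1"
      have x0: "0 \<le> x" unfolding x_def using assms e by simp
      have "s powr (-d) \<le> s powr (\<rho>-2)" using powr_mono[OF dd] elim by simp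
      hence "e/(2*\<epsilon>1) * s powr (-d) \<le> x" unfolding x_def using assms e
        by (simp add: field_simps mult_left_mono)
      hence "min (e/(2*\<epsilon>1) * s powr (-d)) 1 \<le> min x 1" by simp
      also have "\<dots> \<le> 2 * (1 - exp (-x))" using one_minus_exp_ge[OF x0] by simp
      finally have "(1/2) * min (e/(2*\<epsilon>1) * s powr (-d)) 1 \<le> (1 - exp (-x))"
        by (simp add: field_simps)
      also have "\<dots> \<le> measure M (A s)" using LB2[of s] elim unfolding x_def by simp
      finally show ?case by (rule order_trans[OF elim(2)])
    qed
  qed
  have upper: "eventually (\<lambda>s. measure M (A s) \<le> s powr (-(d-\<delta>))) at_top" if \<delta>: "0 < \<delta>" for \<delta>
  proof (cases "\<rho> \<le> 1 \<or> 2 \<le> \<rho>")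
    case True
    hence "d = 0" unfolding d_def dAF_def by auto
    show ?thesis using eventually_ge_at_top[of "1::real"]
    proof eventually_elim
      case (elim s)
      have "measure M (A s) \<le> 1" by simp
      also have "1 \<le> s powr \<delta>" using elim \<delta> by (simp add: ge_one_powr_ge_zero)
      finally show ?case using \<open>d = 0\<close> by simp
    qed
  next
    case False
    hence r: "1 \<le> \<rho>" and dd1: "d \<le> \<rho> - 1" and dd2: "d \<le> 2 - \<rho>"
      unfolding d_def dAF_def by auto
    define \<eta> where "\<eta> = \<delta>/2"
    have eta: "0 < \<eta>" unfolding \<eta>_def using \<delta> by simp
    define K where "K = 1 + \<epsilon>1/(c*\<epsilon>2*\<eta>) + 1/\<epsilon>1 + 1/\<epsilon>2"
    show ?thesis using eventually_gt_at_top[of "1::real"] ev_powr_ge[OF eta, of "6*e"] ev_powr_ge[OF eta, of K]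
    proof eventually_elim
      case (elim s)
      have s1: "1 \<le> s" using elim by simp
      have lnb: "ln s \<le> s powr \<eta> / \<eta>" using ln_powr_bound[OF s1 eta] .
      have a1: "1/s \<le> s powr (-d+\<eta>)"
      proof -
        have "1/s = s powr (-1)" using elim by (simp add: powr_minus inverse_eq_divide)
        also have "\<dots> \<le> s powr (-d+\<eta>)" using powr_mono[of "-1" "-d+\<eta>" s] s1 dhalf eta by simp
        finally show ?thesis .
      qed
      have a2: "\<epsilon>1/(c*\<epsilon>2) * ln s * s powr (1-\<rho>) \<le> \<epsilon>1/(c*\<epsilon>2*\<eta>) * s powr (-d+\<eta>)"
      proof -
        have pa: "s powr \<eta> * s powr (1-\<rho>) = s powr (1-\<rho>+\<eta>)"
          by (simp add: powr_add[symmetric] add.commute)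
        have "\<epsilon>1/(c*\<epsilon>2) * ln s * s powr (1-\<rho>) \<le> \<epsilon>1/(c*\<epsilon>2) * (s powr \<eta> / \<eta>) * s powr (1-\<rho>)"
          using lnb assms c by (intro mult_right_mono mult_left_mono) auto
        also have "\<dots> = \<epsilon>1/(c*\<epsilon>2*\<eta>) * s powr (1-\<rho>+\<eta>)"
          using eta pa by (simp add: field_simps)
        also have "\<dots> \<le> \<epsilon>1/(c*\<epsilon>2*\<eta>) * s powr (-d+\<eta>)"
          using powr_mono[of "1-\<rho>+\<eta>" "-d+\<eta>" s] s1 dd1 assms c eta by (intro mult_left_mono) auto
        finally show ?thesis .
      qed
      have a3: "s powr (\<rho>-2+\<eta>)/\<epsilon>1 \<le> s powr (-d+\<eta>)/\<epsilon>1"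
        using powr_mono[of "\<rho>-2+\<eta>" "-d+\<eta>" s] s1 dd2 assms by (intro divide_right_mono) auto
      have a4: "s powr (-1+\<eta>)/\<epsilon>2 \<le> s powr (-d+\<eta>)/\<epsilon>2"
        using powr_mono[of "-1+\<eta>" "-d+\<eta>" s] s1 dhalf assms by (intro divide_right_mono) auto
      have "measure M (A s) \<le> 1/s + \<epsilon>1/(c*\<epsilon>2) * ln s * s powr (1-\<rho>) + s powr (\<rho>-2+\<eta>)/\<epsilon>1 + s powr (-1+\<eta>)/\<epsilon>2"
        using UB[of s \<eta>] elim eta r by simp
      also have "\<dots> \<le> K * s powr (-d+\<eta>)"
        using a1 a2 a3 a4 unfolding K_def by (simp add: algebra_simps)
      also have "\<dots> \<le> s powr \<eta> * s powr (-d+\<eta>)" using elim by (intro mult_right_mono) auto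
      also have "\<dots> = s powr (-(d-\<delta>))" unfolding \<eta>_def by (simp add: powr_add[symmetric])
      finally show ?case .
    qed
  qed
  have lim: "((\<lambda>s. - ln (ptAF M X1 X2 Rd Rs \<rho> s) / ln s) \<longlongrightarrow> d) at_top"
  proof (rule tendstoI)
    fix r :: real assume r: "0 < r"
    define \<delta> where "\<delta> = r/2"
    have \<delta>: "0 < \<delta>" unfolding \<delta>_def using r by simp
    show "eventually (\<lambda>s. dist (- ln (ptAF M X1 X2 Rd Rs \<rho> s) / ln s) d < r) at_top"
      using lower[OF \<delta>] upper[OF \<delta>] eventually_gt_at_top[of "1::real"]
    proof eventually_elim
      case (elim s)
      have ls: "0 < ln s" using elim by simp
      have pp: "0 < measure M (A s)" using elim(1) elim(3) powr_gt_zero[of s "-(d+\<delta>)"] by linarith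
      have "ln (s powr (-(d+\<delta>))) \<le> ln (measure M (A s))"
        using elim pp by (subst ln_le_cancel_iff) auto
      hence lo: "-(d+\<delta>) * ln s \<le> ln (measure M (A s))" by simp
      have "ln (measure M (A s)) \<le> ln (s powr (-(d-\<delta>)))"
        using elim pp by (subst ln_le_cancel_iff) auto
      hence hi: "ln (measure M (A s)) \<le> -(d-\<delta>) * ln s" by simp
      have "d - \<delta> \<le> - ln (measure M (A s)) / ln s"
        using hi ls by (simp add: field_simps)
      moreover have "- ln (measure M (A s)) / ln s \<le> d + \<delta>"
        using lo ls by (simp add: field_simps)
      ultimately show ?case unfolding p_eq dist_real_def \<delta>_def using r by (simp add: abs_le_iff)
    qed
  qed
  have "Limsup at_top (\<lambda>snr. ereal (- ln (ptAF M X1 X2 Rd Rs \<rho> snr) / ln snr)) = ereal d"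
    by (rule lim_imp_Limsup) (use lim in auto)
  moreover have "dAF \<rho> \<le> 1/2 \<and> (dAF \<rho> = 1/2 \<longleftrightarrow> \<rho> = 3/2)"
    unfolding dAF_def by auto
  ultimately show ?thesis unfolding d_def by simp
qed

end
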